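(* Let $\alpha$ be a unit-speed curve in $\mathbb{R}^3$ with arc length $s$, nonzero curvature $\kappa$ and torsion $\tau$. Let $\alpha_T$ be its tangent indicatrix, and let $\beta$ be a Bertrand-direction curve of $\alpha_T$ with constant angle $\theta$ (so $X=\cos\theta\,T_T+\sin\theta\,B_T$). Then, at corresponding parameter values, $$\frac{-\sin\theta+(\tau_\beta/\kappa_\beta)\cos\theta}{\cos\theta+(\tau_\beta/\kappa_\beta)\sin\theta}=\frac{\kappa^2}{(\kappa^2+\tau^2)^{3/2}}\Big(\frac{\tau}{\kappa}\Big)',$$ where $'=d/ds$.
   Context: Let $\alpha:I\subset\mathbb{R}\to\mathbb{R}^3$ be a unit-speed curve with arc length $s$, curvature $\kappa>0$, torsion $\tau$ and Frenet frame $\{T,N,B\}$. Put $f=\tau/\kappa$ and $\sigma=\frac{\kappa^2}{(\kappa^2+\tau^2)^{3/2}}(\tau/\kappa)'$. The tangent indicatrix of $\alpha$ is the curve $\alpha_T=T$ on the unit sphere. Its arc length is $s_T=\int\kappa\,ds$, so parameters $s$ and $s_T(s)$ correspond. Its Frenet apparatus is $\{T_T,N_T,B_T,\kappa_T,\tau_T\}$, with $\frac{dT_T}{ds_T}=\kappa_TN_T$, $\frac{dN_T}{ds_T}=-\kappa_TT_T+\tau_TB_T$ and $\frac{dB_T}{ds_T}=-\tau_TN_T$. It is known that $\kappa_T=\sqrt{1+f^2}$ and $\tau_T=\sigma\sqrt{1+f^2}$. Let $x,y,z$ be real functions of $s_T$ with $x^2+y^2+z^2=1$, and set $X=xT_T+yN_T+zB_T$.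 An integral curve $\beta$ of $X$, meaning $d\beta/ds_T=X$, is an $X$-direction curve of $\alpha_T$. It is regarded as a unit-speed Frenet curve with frame $\{T_\beta=X,N_\beta,B_\beta\}$, curvature $\kappa_\beta>0$ and torsion $\tau_\beta$. $\beta$ is a Bertrand-direction curve of $\alpha_T$ if $N_\beta=N_T$; then $X=\cos\theta\,T_T+\sin\theta\,B_T$ for a constant $\theta$. *)

theory Defs
  imports "HOL-Analysis.Analysis"
begin

definition frenet_apparatus ::
  "real set \<Rightarrow> (real \<Rightarrow> real^3) \<Rightarrow> (real \<Rightarrow> real^3) \<Rightarrow> (real \<Rightarrow> real^3) \<Rightarrow> (real \<Rightarrow> real^3)
    \<Rightarrow> (real \<Rightarrow> real) \<Rightarrow> (real \<Rightarrow> real) \<Rightarrow> bool" where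
  "frenet_apparatus I c T N B k t \<longleftrightarrow>
     open I \<and> is_interval I \<and> I \<noteq> {} \<and>
     (\<forall>s\<in>I. (c has_vector_derivative T s) (at s)
        \<and> norm (T s) = 1 \<and> norm (N s) = 1 \<and> T s \<bullet> N s = 0
        \<and> B s = cross3 (T s) (N s)
        \<and> k s > 0
        \<and> (T has_vector_derivative (k s *\<^sub>R N s)) (at s)
        \<and> (N has_vector_derivative (- (k s *\<^sub>R T s) + t s *\<^sub>R B s)) (at s)
        \<and> (B has_vector_derivative (- (t s *\<^sub>R N s))) (at s))"

end

theory Submission imports Defs begin
lemma cross_cross_l: "cross3 (cross3 a b) c = (a \<bullet> c) *\<^sub>R b - (b \<bullet> c) *\<^sub>R a" for a b c :: "real^3"
  unfolding vec_eq_iff forall_3 by (simp add: cross3_simps)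
lemma cross_cross_r: "cross3 a (cross3 b c) = (a \<bullet> c) *\<^sub>R b - (a \<bullet> b) *\<^sub>R c" for a b c :: "real^3"
  unfolding vec_eq_iff forall_3 by (simp add: cross3_simps)
lemma frame:
  fixes T N B :: "real^3"
  assumes "norm T = 1" "norm N = 1" "T \<bullet> N = 0" "B = cross3 T N"
  shows "B \<bullet> T = 0" "B \<bullet> N = 0" "B \<bullet> B = 1" "T \<bullet> T = 1" "N \<bullet> N = 1" "N \<bullet> T = 0"
    "T \<bullet> B = 0" "N \<bullet> B = 0"
    "cross3 N B = T" "cross3 B T = N" "cross3 N T = - B" "cross3 B N = - T"
proof -
  have TT: "T \<bullet> T = 1" "N \<bullet> N = 1" using assms by (simp_all add: dot_square_norm)
  have nB: "(norm B)^2 = 1" using norm_cross_dot[of T N] assms by simp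
  show "B \<bullet> T = 0" "B \<bullet> N = 0" "T \<bullet> B = 0" "N \<bullet> B = 0" using assms dot_cross_self
    by (auto simp: inner_commute)
  show "B \<bullet> B = 1" using nB by (simp add: power2_norm_eq_inner)
  show "T \<bullet> T = 1" "N \<bullet> N = 1" by fact+
  show "N \<bullet> T = 0" using assms by (simp add: inner_commute)
  show "cross3 N B = T" using assms TT by (simp add: cross_cross_r inner_commute)
  show "cross3 B T = N" using assms TT by (simp add: cross_cross_l inner_commute)
  show "cross3 N T = - B" using assms by (metis cross_skew)
  show "cross3 B N = - T" using assms TT by (simp add: cross_cross_l inner_commute)
qed
lemma hvd_cmul: "(g has_vector_derivative g') (at x) \<Longrightarrow> ((\<lambda>x. c *\<^sub>R g x) has_vector_derivative (c *\<^sub>R g')) (at x)"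
  using has_vector_derivative_scaleR[OF DERIV_const[of c], of g g' x UNIV] by simp

theorem corollary5p6:
  fixes I :: "real set"
    and \<alpha> T N B :: "real \<Rightarrow> real^3" and \<kappa> \<tau> :: "real \<Rightarrow> real"
    and sT :: "real \<Rightarrow> real"
    and \<alpha>T TT NT BT :: "real \<Rightarrow> real^3" and \<kappa>T \<tau>T :: "real \<Rightarrow> real"
    and \<beta> T\<beta> N\<beta> B\<beta> :: "real \<Rightarrow> real^3" and \<kappa>\<beta> \<tau>\<beta> :: "real \<Rightarrow> real"
    and \<theta> :: real
  assumes alpha: "frenet_apparatus I \<alpha> T N B \<kappa> \<tau>"
    and smooth: "\<forall>s\<in>I. \<kappa> differentiable (at s) \<and> \<tau> differentiable (at s)"
    and arclen: "\<forall>s\<in>I. (sT has_real_derivative \<kappa> s) (at s)"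
    and indicatrix: "\<forall>s\<in>I. \<alpha>T (sT s) = T s"
    and alphaT: "frenet_apparatus (sT ` I) \<alpha>T TT NT BT \<kappa>T \<tau>T"
    and beta: "frenet_apparatus (sT ` I) \<beta> T\<beta> N\<beta> B\<beta> \<kappa>\<beta> \<tau>\<beta>"
    and X: "\<forall>u\<in>sT ` I. T\<beta> u = cos \<theta> *\<^sub>R TT u + sin \<theta> *\<^sub>R BT u"
    and bertrand: "\<forall>u\<in>sT ` I. N\<beta> u = NT u"
    and s: "s \<in> I"
  shows "(- sin \<theta> + (\<tau>\<beta> (sT s) / \<kappa>\<beta> (sT s)) * cos \<theta>)
           / (cos \<theta> + (\<tau>\<beta> (sT s) / \<kappa>\<beta> (sT s)) * sin \<theta>)
         = \<kappa> s ^ 2 / (\<kappa> s ^ 2 + \<tau> s ^ 2) powr (3/2) * deriv (\<lambda>r. \<tau> r / \<kappa> r) s"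
proof -
  have oI: "open I" and A: "\<And>y. y \<in> I \<Longrightarrow> (\<alpha> has_vector_derivative T y) (at y)
        \<and> norm (T y) = 1 \<and> norm (N y) = 1 \<and> T y \<bullet> N y = 0
        \<and> B y = cross3 (T y) (N y)
        \<and> \<kappa> y > 0
        \<and> (T has_vector_derivative (\<kappa> y *\<^sub>R N y)) (at y)
        \<and> (N has_vector_derivative (- (\<kappa> y *\<^sub>R T y) + \<tau> y *\<^sub>R B y)) (at y)
        \<and> (B has_vector_derivative (- (\<tau> y *\<^sub>R N y))) (at y)"
    using alpha unfolding frenet_apparatus_def by auto
  define S where "S = sT ` I"
  have oS: "open S" and AT: "\<And>y. y \<in> S \<Longrightarrow> (\<alpha>T has_vector_derivative TT y) (at y)
        \<and> norm (TT y) = 1 \<and> norm (NT y) = 1 \<and> TT y \<bullet> NT y = 0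
        \<and> BT y = cross3 (TT y) (NT y)
        \<and> \<kappa>T y > 0
        \<and> (TT has_vector_derivative (\<kappa>T y *\<^sub>R NT y)) (at y)
        \<and> (NT has_vector_derivative (- (\<kappa>T y *\<^sub>R TT y) + \<tau>T y *\<^sub>R BT y)) (at y)
        \<and> (BT has_vector_derivative (- (\<tau>T y *\<^sub>R NT y))) (at y)"
    using alphaT unfolding frenet_apparatus_def S_def by auto
  have AB: "\<And>y. y \<in> S \<Longrightarrow> (\<beta> has_vector_derivative T\<beta> y) (at y)
        \<and> norm (T\<beta> y) = 1 \<and> norm (N\<beta> y) = 1 \<and> T\<beta> y \<bullet> N\<beta> y = 0
        \<and> B\<beta> y = cross3 (T\<beta> y) (N\<beta> y)
        \<and> \<kappa>\<beta> y > 0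
        \<and> (T\<beta> has_vector_derivative (\<kappa>\<beta> y *\<^sub>R N\<beta> y)) (at y)
        \<and> (N\<beta> has_vector_derivative (- (\<kappa>\<beta> y *\<^sub>R T\<beta> y) + \<tau>\<beta> y *\<^sub>R B\<beta> y)) (at y)
        \<and> (B\<beta> has_vector_derivative (- (\<tau>\<beta> y *\<^sub>R N\<beta> y))) (at y)"
    using beta unfolding frenet_apparatus_def S_def by auto
  have sTS: "\<And>y. y \<in> I \<Longrightarrow> sT y \<in> S" unfolding S_def by auto
  have sTv: "\<And>y. y \<in> I \<Longrightarrow> (sT has_vector_derivative \<kappa> y) (at y)"
    using arclen by (simp add: has_real_derivative_iff_has_vector_derivative)
  have TTN: "TT (sT y) = N y" if y: "y \<in> I" for y
  proof -
    have d1: "((\<alpha>T \<circ> sT) has_vector_derivative (\<kappa> y *\<^sub>R TT (sT y))) (at y)"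
      by (rule vector_diff_chain_at[OF sTv[OF y]]) (use AT[OF sTS[OF y]] in auto)
    have "(T has_vector_derivative (\<kappa> y *\<^sub>R TT (sT y))) (at y)"
      by (rule has_vector_derivative_transform_within_open[OF d1 oI y]) (simp add: indicatrix)
    then have "\<kappa> y *\<^sub>R TT (sT y) = \<kappa> y *\<^sub>R N y"
      using A[OF y] vector_derivative_unique_at by blast
    then show ?thesis using A[OF y] by simp
  qed
  define h where "h y = sqrt (\<kappa> y ^ 2 + \<tau> y ^ 2)" for y
  have hpos: "h y > 0" if "y \<in> I" for y
    using A[OF that] unfolding h_def by (simp add: add_pos_nonneg)
  have NTf: "NT (sT y) = (1 / h y) *\<^sub>R (- (\<kappa> y *\<^sub>R T y) + \<tau> y *\<^sub>R B y)"
    and kTf: "\<kappa>T (sT y) = h y / \<kappa> y"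
    and BTf: "BT (sT y) = (1 / h y) *\<^sub>R (\<kappa> y *\<^sub>R B y + \<tau> y *\<^sub>R T y)"
    if y: "y \<in> I" for y
  proof -
    let ?V = "- (\<kappa> y *\<^sub>R T y) + \<tau> y *\<^sub>R B y"
    have fr: "B y \<bullet> T y = 0" "B y \<bullet> N y = 0" "B y \<bullet> B y = 1" "T y \<bullet> T y = 1" "N y \<bullet> N y = 1" "N y \<bullet> T y = 0"
    "T y \<bullet> B y = 0" "N y \<bullet> B y = 0"
    "cross3 (N y) (B y) = T y" "cross3 (B y) (T y) = N y" "cross3 (N y) (T y) = - B y" "cross3 (B y) (N y) = - T y"
      using frame[of "T y" "N y" "B y"] A[OF y] by auto
    have frT: "NT (sT y) \<bullet> NT (sT y) = 1"
      using frame[of "TT (sT y)" "NT (sT y)" "BT (sT y)"] AT[OF sTS[OF y]] by auto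
    have d1: "((TT \<circ> sT) has_vector_derivative (\<kappa> y *\<^sub>R (\<kappa>T (sT y) *\<^sub>R NT (sT y)))) (at y)"
      by (rule vector_diff_chain_at[OF sTv[OF y]]) (use AT[OF sTS[OF y]] in auto)
    have "(N has_vector_derivative (\<kappa> y *\<^sub>R (\<kappa>T (sT y) *\<^sub>R NT (sT y)))) (at y)"
      by (rule has_vector_derivative_transform_within_open[OF d1 oI y]) (simp add: TTN)
    then have eq: "(\<kappa> y * \<kappa>T (sT y)) *\<^sub>R NT (sT y) = ?V"
      using A[OF y] vector_derivative_unique_at by fastforce
    have "?V \<bullet> ?V = \<kappa> y ^ 2 + \<tau> y ^ 2"
      using fr by (simp add: inner_add_left inner_add_right inner_diff_left inner_diff_right power2_eq_square)
    moreover have "(\<kappa> y * \<kappa>T (sT y)) *\<^sub>R NT (sT y) \<bullet> ((\<kappa> y * \<kappa>T (sT y)) *\<^sub>R NT (sT y)) = (\<kappa> y * \<kappa>T (sT y))^2"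
      using frT by (simp add: power2_eq_square)
    ultimately have "(\<kappa> y * \<kappa>T (sT y))^2 = h y ^ 2" using eq unfolding h_def by simp
    then have kk: "\<kappa> y * \<kappa>T (sT y) = h y"
      using A[OF y] AT[OF sTS[OF y]] hpos[OF y]
      by (simp add: power2_eq_iff_nonneg)
    show NT: "NT (sT y) = (1 / h y) *\<^sub>R ?V"
    proof -
      have "NT (sT y) = (1 / h y) *\<^sub>R ((\<kappa> y * \<kappa>T (sT y)) *\<^sub>R NT (sT y))"
        using kk hpos[OF y] by simp
      then show ?thesis using eq by simp
    qed
    show "\<kappa>T (sT y) = h y / \<kappa> y" using kk A[OF y] by (simp add: field_simps)
    have "BT (sT y) = cross3 (N y) ((1 / h y) *\<^sub>R ?V)"
      using AT[OF sTS[OF y]] TTN[OF y] NT by simp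
    also have "\<dots> = (1 / h y) *\<^sub>R (\<kappa> y *\<^sub>R B y + \<tau> y *\<^sub>R T y)"
      using fr by (simp add: cross_mult_right cross_add_right Cross3.right_diff_distrib)
    finally show "BT (sT y) = (1 / h y) *\<^sub>R (\<kappa> y *\<^sub>R B y + \<tau> y *\<^sub>R T y)" .
  qed
  define a where "a = sT s"
  have aS: "a \<in> S" using sTS[OF s] a_def by simp
  obtain k' where k': "(\<kappa> has_real_derivative k') (at s)"
    using smooth s by (auto simp: real_differentiable_def)
  obtain t' where t': "(\<tau> has_real_derivative t') (at s)"
    using smooth s by (auto simp: real_differentiable_def)
  obtain h' where h': "(h has_real_derivative h') (at s)"
  proof -
    have "(h has_real_derivative (inverse (sqrt (\<kappa> s ^ 2 + \<tau> s ^ 2)) / 2 * (2 * \<kappa> s * k' + 2 * \<tau> s * t'))) (at s)"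
      unfolding h_def[abs_def]
      apply (rule DERIV_chain2[where f = sqrt])
       apply (rule DERIV_real_sqrt)
      using hpos[OF s] unfolding h_def apply simp
      by (auto intro!: derivative_eq_intros k' t')
    then show ?thesis using that by blast
  qed
  have fr: "B s \<bullet> T s = 0" "B s \<bullet> N s = 0" "B s \<bullet> B s = 1" "T s \<bullet> T s = 1" "N s \<bullet> N s = 1" "N s \<bullet> T s = 0"
    "T s \<bullet> B s = 0" "N s \<bullet> B s = 0"
    using frame[of "T s" "N s" "B s"] A[OF s] by auto
  have frT: "BT a \<bullet> TT a = 0" "BT a \<bullet> NT a = 0" "NT a \<bullet> NT a = 1" "TT a \<bullet> NT a = 0"
    "cross3 (BT a) (NT a) = - TT a"
    using frame[of "TT a" "NT a" "BT a"] AT[OF aS] by auto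
  have d1: "((BT \<circ> sT) has_vector_derivative (\<kappa> s *\<^sub>R (- (\<tau>T a *\<^sub>R NT a)))) (at s)"
    by (rule vector_diff_chain_at[OF sTv[OF s]]) (use AT[OF aS] a_def in auto)
  have d2: "((\<lambda>y. h y *\<^sub>R (BT \<circ> sT) y) has_vector_derivative
      (h s *\<^sub>R (\<kappa> s *\<^sub>R (- (\<tau>T a *\<^sub>R NT a))) + h' *\<^sub>R BT a)) (at s)"
    using has_vector_derivative_scaleR[OF h' d1] a_def by simp
  have d3: "((\<lambda>y. \<kappa> y *\<^sub>R B y + \<tau> y *\<^sub>R T y) has_vector_derivative
      ((\<kappa> s *\<^sub>R (- (\<tau> s *\<^sub>R N s)) + k' *\<^sub>R B s) + (\<tau> s *\<^sub>R (\<kappa> s *\<^sub>R N s) + t' *\<^sub>R T s))) (at s)"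
    using A[OF s] by (intro has_vector_derivative_add has_vector_derivative_scaleR k' t') auto
  have d4: "((\<lambda>y. \<kappa> y *\<^sub>R B y + \<tau> y *\<^sub>R T y) has_vector_derivative
      (h s *\<^sub>R (\<kappa> s *\<^sub>R (- (\<tau>T a *\<^sub>R NT a))) + h' *\<^sub>R BT a)) (at s)"
    by (rule has_vector_derivative_transform_within_open[OF d2 oI s])
      (use hpos BTf in force)
  have E: "h s *\<^sub>R (\<kappa> s *\<^sub>R (- (\<tau>T a *\<^sub>R NT a))) + h' *\<^sub>R BT a
      = (\<kappa> s *\<^sub>R (- (\<tau> s *\<^sub>R N s)) + k' *\<^sub>R B s) + (\<tau> s *\<^sub>R (\<kappa> s *\<^sub>R N s) + t' *\<^sub>R T s)"
    using d3 d4 vector_derivative_unique_at by blast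
  have E2: "- (h s * \<kappa> s * \<tau>T a) = k' * (B s \<bullet> NT a) + t' * (T s \<bullet> NT a)"
    using arg_cong[OF E, of "\<lambda>v. v \<bullet> NT a"] frT
    by (simp add: inner_add_left inner_diff_left algebra_simps)
  have "B s \<bullet> NT a = \<tau> s / h s" "T s \<bullet> NT a = - \<kappa> s / h s"
    using NTf[OF s] fr unfolding a_def
    by (simp_all add: inner_add_right inner_diff_right)
  with E2 have tTf: "\<tau>T a = (t' * \<kappa> s - k' * \<tau> s) / (h s ^ 2 * \<kappa> s)"
    using hpos[OF s] A[OF s] by (simp add: field_simps power2_eq_square)
  have kTa: "\<kappa>T a = h s / \<kappa> s" using kTf[OF s] a_def by simp
  define c where "c = cos \<theta>"
  define sn where "sn = sin \<theta>"
  have d5: "((\<lambda>v. c *\<^sub>R TT v + sn *\<^sub>R BT v) has_vector_derivative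
     (c *\<^sub>R (\<kappa>T a *\<^sub>R NT a) + sn *\<^sub>R (- (\<tau>T a *\<^sub>R NT a)))) (at a)"
    using AT[OF aS] by (intro has_vector_derivative_add hvd_cmul) auto
  have "(T\<beta> has_vector_derivative (c *\<^sub>R (\<kappa>T a *\<^sub>R NT a) + sn *\<^sub>R (- (\<tau>T a *\<^sub>R NT a)))) (at a)"
    by (rule has_vector_derivative_transform_within_open[OF d5 oS aS]) (use X S_def c_def sn_def in auto)
  then have "\<kappa>\<beta> a *\<^sub>R NT a = c *\<^sub>R (\<kappa>T a *\<^sub>R NT a) + sn *\<^sub>R (- (\<tau>T a *\<^sub>R NT a))"
    using AB[OF aS] bertrand aS S_def vector_derivative_unique_at by fastforce
  from arg_cong[OF this, of "\<lambda>v. v \<bullet> NT a"]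
  have kb: "\<kappa>\<beta> a = c * \<kappa>T a - sn * \<tau>T a" using frT by (simp add: inner_add_left inner_diff_left)
  have Bb: "B\<beta> v = c *\<^sub>R BT v - sn *\<^sub>R TT v" if v: "v \<in> S" for v
  proof -
    have "cross3 (BT v) (NT v) = - TT v"
      using frame[of "TT v" "NT v" "BT v"] AT[OF v] by auto
    moreover have "B\<beta> v = cross3 (c *\<^sub>R TT v + sn *\<^sub>R BT v) (NT v)"
      using AB[OF v] X bertrand v S_def c_def sn_def by auto
    ultimately show ?thesis using AT[OF v] by (simp add: cross_add_left cross_mult_left)
  qed
  have d6: "((\<lambda>v. c *\<^sub>R BT v - sn *\<^sub>R TT v) has_vector_derivative
     (c *\<^sub>R (- (\<tau>T a *\<^sub>R NT a)) - sn *\<^sub>R (\<kappa>T a *\<^sub>R NT a))) (at a)"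
    using AT[OF aS] by (intro has_vector_derivative_diff hvd_cmul) auto
  have "(B\<beta> has_vector_derivative (c *\<^sub>R (- (\<tau>T a *\<^sub>R NT a)) - sn *\<^sub>R (\<kappa>T a *\<^sub>R NT a))) (at a)"
    by (rule has_vector_derivative_transform_within_open[OF d6 oS aS]) (use Bb in auto)
  then have "- (\<tau>\<beta> a *\<^sub>R NT a) = c *\<^sub>R (- (\<tau>T a *\<^sub>R NT a)) - sn *\<^sub>R (\<kappa>T a *\<^sub>R NT a)"
    using AB[OF aS] bertrand aS S_def vector_derivative_unique_at by fastforce
  from arg_cong[OF this, of "\<lambda>v. v \<bullet> NT a"]
  have tb: "\<tau>\<beta> a = c * \<tau>T a + sn * \<kappa>T a" using frT by (simp add: inner_add_left inner_diff_left)
  have kbpos: "\<kappa>\<beta> a > 0" using AB[OF aS] by simp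
  have kTpos: "\<kappa>T a > 0" using AT[OF aS] by simp
  have cs: "c^2 + sn^2 = 1" unfolding c_def sn_def by simp
  have L: "(- sn + (\<tau>\<beta> a / \<kappa>\<beta> a) * c) / (c + (\<tau>\<beta> a / \<kappa>\<beta> a) * sn) = \<tau>T a / \<kappa>T a"
  proof -
    have "- sn * \<kappa>\<beta> a + \<tau>\<beta> a * c = \<tau>T a * (c^2 + sn^2)"
      unfolding kb tb by (simp add: algebra_simps power2_eq_square)
    then have n: "- sn * \<kappa>\<beta> a + \<tau>\<beta> a * c = \<tau>T a" using cs by simp
    have "c * \<kappa>\<beta> a + \<tau>\<beta> a * sn = \<kappa>T a * (c^2 + sn^2)"
      unfolding kb tb by (simp add: algebra_simps power2_eq_square)
    then have d: "c * \<kappa>\<beta> a + \<tau>\<beta> a * sn = \<kappa>T a" using cs by simp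
    have n2: "- sn + (\<tau>\<beta> a / \<kappa>\<beta> a) * c = \<tau>T a / \<kappa>\<beta> a"
      using kbpos n[symmetric] by (simp add: field_simps)
    have d2: "c + (\<tau>\<beta> a / \<kappa>\<beta> a) * sn = \<kappa>T a / \<kappa>\<beta> a"
      using kbpos d[symmetric] by (simp add: field_simps)
    show ?thesis unfolding n2 d2 using kbpos by simp
  qed
  have dq: "deriv (\<lambda>r. \<tau> r / \<kappa> r) s = (t' * \<kappa> s - \<tau> s * k') / (\<kappa> s * \<kappa> s)"
    by (rule DERIV_imp_deriv) (use t' k' A[OF s] in \<open>auto intro!: derivative_eq_intros\<close>)
  have hp: "(\<kappa> s ^ 2 + \<tau> s ^ 2) powr (3/2) = h s ^ 3"
  proof -
    have "(\<kappa> s ^ 2 + \<tau> s ^ 2) powr (3/2) = (\<kappa> s ^ 2 + \<tau> s ^ 2) powr 1 * (\<kappa> s ^ 2 + \<tau> s ^ 2) powr (1/2)"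
      using powr_add[of "\<kappa> s ^ 2 + \<tau> s ^ 2" 1 "1/2"] by simp
    also have "\<dots> = (\<kappa> s ^ 2 + \<tau> s ^ 2) * sqrt (\<kappa> s ^ 2 + \<tau> s ^ 2)"
      using hpos[OF s] unfolding h_def by (simp add: powr_half_sqrt)
    also have "\<dots> = h s ^ 3" unfolding h_def
      by (simp add: power3_eq_cube)
    finally show ?thesis .
  qed
  show ?thesis
    unfolding a_def[symmetric] c_def[symmetric] sn_def[symmetric] L dq hp tTf kTa
    using hpos[OF s] A[OF s] by (simp add: field_simps power2_eq_square power3_eq_cube)
qed
end
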